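(* Let $\mathcal S \subseteq \mathsf P^n$ be the stabilizer group of an $n$-qubit stabilizer code and $\mathcal L = \mathcal S^\perp$ its group of logical operators. Let $\Gamma \subseteq 2^{\{1,\dots,n\}}$ be a set of supports, and consider Pauli channels of the form $P = \mathop{\ast}_{\gamma\in\Gamma} P_\gamma$ (convolution over $\gamma \in \Gamma$), where each $P_\gamma$ is a probability distribution on $\mathsf P^n$ with $P_\gamma(e)=0$ whenever $\operatorname{supp}(e)\not\subseteq\gamma$. Call such a $P$ correctable if (i) for all $\gamma_1,\gamma_2\in\Gamma$ the region $\gamma_1\cup\gamma_2$ is correctable, and (ii) $P(I)>\tfrac12$. Then for a correctable channel $P$ the logical channel $$P_L(e)=\frac{1}{|\mathcal S|}\sum_{s\in\mathcal S}P(es),\qquad e\in\mathsf P^n,$$ is uniquely determined by the stabilizer expectations (syndrome statistics) $E(s)=\sum_{e\in\mathsf P^n}\langle s,e\rangle P(e)$, $s\in\mathcal S$. That is, if $P$ and $P'$ are two correctable channels with the same set of supports $\Gamma$ and $\sum_e\langle s,e\rangle P(e)=\sum_e\langle s,e\rangle P'(e)$ for all $s\in\mathcal S$, then $P_L=P'_L$.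
   Context: $\mathsf P^n$ denotes the effective $n$-qubit Pauli group, i.e. the $n$-qubit Pauli group modulo phases $\{\pm1,\pm i\}$; it is Abelian. For $a,e\in\mathsf P^n$, $\langle a,e\rangle=+1$ if $a$ and $e$ commute in the Pauli group and $-1$ if they anticommute. For a subgroup $B$, $B^\perp=\{a\in\mathsf P^n:\langle a,b\rangle=+1\ \forall b\in B\}$. A stabilizer group is a subgroup $\mathcal S$ with $\mathcal S\subseteq\mathcal S^\perp$ (coming from a commuting subgroup of the Pauli group not containing $-I$). The support $\operatorname{supp}(e)$ is the set of qubits on which $e$ acts nontrivially. A region $R\subseteq\{1,\dots,n\}$ is correctable if every $l\in\mathcal L$ with $\operatorname{supp}(l)\subseteq R$ lies in $\mathcal S$. Convolution of functions on $\mathsf P^n$: $(f\ast g)(e)=\sum_{e'}f(e')g(ee')$. *)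

theory Defs
  imports Complex_Main
begin

text \<open>Single-qubit Paulis modulo phase (the Klein four group).\<close>
datatype pauli1 = PI | PX | PY | PZ

fun mult1 :: "pauli1 \<Rightarrow> pauli1 \<Rightarrow> pauli1" where
  "mult1 PI b = b"
| "mult1 a PI = a"
| "mult1 PX PX = PI" | "mult1 PY PY = PI" | "mult1 PZ PZ = PI"
| "mult1 PX PY = PZ" | "mult1 PY PX = PZ"
| "mult1 PX PZ = PY" | "mult1 PZ PX = PY"
| "mult1 PY PZ = PX" | "mult1 PZ PY = PX"

definition anticomm1 :: "pauli1 \<Rightarrow> pauli1 \<Rightarrow> bool" where
  "anticomm1 a b \<longleftrightarrow> a \<noteq> PI \<and> b \<noteq> PI \<and> a \<noteq> b"

type_synonym pauli = "nat \<Rightarrow> pauli1"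

definition pauli_group :: "nat \<Rightarrow> pauli set" where
  "pauli_group n = {e. \<forall>i. e i \<noteq> PI \<longrightarrow> i \<in> {1..n}}"

definition pid :: pauli where "pid = (\<lambda>i. PI)"

definition pmult :: "pauli \<Rightarrow> pauli \<Rightarrow> pauli" where
  "pmult e f = (\<lambda>i. mult1 (e i) (f i))"

definition supp :: "pauli \<Rightarrow> nat set" where
  "supp e = {i. e i \<noteq> PI}"

text \<open>Commutation character \<langle>a,e\<rangle> \<in> {+1,-1}.\<close>
definition symp :: "nat \<Rightarrow> pauli \<Rightarrow> pauli \<Rightarrow> real" where
  "symp n a e = (-1) ^ card {i \<in> {1..n}. anticomm1 (a i) (e i)}"

definition perp :: "nat \<Rightarrow> pauli set \<Rightarrow> pauli set" where
  "perp n B = {a \<in> pauli_group n. \<forall>b\<in>B. symp n a b = 1}"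

definition psubgroup :: "nat \<Rightarrow> pauli set \<Rightarrow> bool" where
  "psubgroup n B \<longleftrightarrow> B \<subseteq> pauli_group n \<and> pid \<in> B \<and> (\<forall>a\<in>B. \<forall>b\<in>B. pmult a b \<in> B)"

definition stabilizer_group :: "nat \<Rightarrow> pauli set \<Rightarrow> bool" where
  "stabilizer_group n S \<longleftrightarrow> psubgroup n S \<and> S \<subseteq> perp n S"

definition correctable_region :: "nat \<Rightarrow> pauli set \<Rightarrow> nat set \<Rightarrow> bool" where
  "correctable_region n S R \<longleftrightarrow> (\<forall>l \<in> perp n S. supp l \<subseteq> R \<longrightarrow> l \<in> S)"

text \<open>Convolution of functions on P^n (functions are taken to vanish outside P^n).\<close>
definition conv :: "nat \<Rightarrow> (pauli \<Rightarrow> real) \<Rightarrow> (pauli \<Rightarrow> real) \<Rightarrow> pauli \<Rightarrow> real" where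
  "conv n f g e = (if e \<in> pauli_group n then (\<Sum>e'\<in>pauli_group n. f e' * g (pmult e e')) else 0)"

definition delta_id :: "nat \<Rightarrow> pauli \<Rightarrow> real" where
  "delta_id n e = (if e = pid then 1 else 0)"

text \<open>Convolution over a finite index set \<Gamma> (convolution is commutative and associative).\<close>
definition conv_over :: "nat \<Rightarrow> nat set set \<Rightarrow> (nat set \<Rightarrow> pauli \<Rightarrow> real) \<Rightarrow> pauli \<Rightarrow> real" where
  "conv_over n \<Gamma> Pf = Finite_Set.fold (\<lambda>\<gamma> acc. conv n (Pf \<gamma>) acc) (delta_id n) \<Gamma>"

definition prob_dist :: "nat \<Rightarrow> (pauli \<Rightarrow> real) \<Rightarrow> bool" where
  "prob_dist n p \<longleftrightarrow> (\<forall>e. p e \<ge> 0) \<and> (\<forall>e. e \<notin> pauli_group n \<longrightarrow> p e = 0)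
     \<and> (\<Sum>e\<in>pauli_group n. p e) = 1"

definition local_family :: "nat \<Rightarrow> nat set set \<Rightarrow> (nat set \<Rightarrow> pauli \<Rightarrow> real) \<Rightarrow> bool" where
  "local_family n \<Gamma> Pf \<longleftrightarrow> (\<forall>\<gamma>\<in>\<Gamma>. prob_dist n (Pf \<gamma>) \<and> (\<forall>e. \<not> supp e \<subseteq> \<gamma> \<longrightarrow> Pf \<gamma> e = 0))"

definition correctable_channel ::
  "nat \<Rightarrow> pauli set \<Rightarrow> nat set set \<Rightarrow> (nat set \<Rightarrow> pauli \<Rightarrow> real) \<Rightarrow> bool" where
  "correctable_channel n S \<Gamma> Pf \<longleftrightarrow>
     (\<forall>\<gamma>1\<in>\<Gamma>. \<forall>\<gamma>2\<in>\<Gamma>. correctable_region n S (\<gamma>1 \<union> \<gamma>2))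
     \<and> conv_over n \<Gamma> Pf pid > 1/2"

definition logical_channel :: "pauli set \<Rightarrow> (pauli \<Rightarrow> real) \<Rightarrow> pauli \<Rightarrow> real" where
  "logical_channel S P e = (1 / real (card S)) * (\<Sum>s\<in>S. P (pmult e s))"

definition stab_expect :: "nat \<Rightarrow> (pauli \<Rightarrow> real) \<Rightarrow> pauli \<Rightarrow> real" where
  "stab_expect n P s = (\<Sum>e\<in>pauli_group n. symp n s e * P e)"

end

theory Submission
  imports Defs
begin

lemma mult1_comm: "mult1 a b = mult1 b a"
  by (cases a; cases b; simp)
lemma mult1_assoc: "mult1 (mult1 a b) c = mult1 a (mult1 b c)"
  by (cases a; cases b; cases c; simp)
lemma mult1_self[simp]: "mult1 a a = PI"
  by (cases a; simp)
lemma mult1_PI_right[simp]: "mult1 a PI = a"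
  by (cases a; simp)

lemma pmult_comm: "pmult a b = pmult b a"
  unfolding pmult_def by (simp add: mult1_comm)
lemma pmult_assoc: "pmult (pmult a b) c = pmult a (pmult b c)"
  unfolding pmult_def by (simp add: mult1_assoc)
lemma pmult_self[simp]: "pmult a a = pid"
  unfolding pmult_def pid_def by simp
lemma pmult_pid_right[simp]: "pmult a pid = a"
  unfolding pmult_def pid_def by simp
lemma pmult_pid_left[simp]: "pmult pid a = a"
  unfolding pmult_def pid_def by simp
lemma pmult_cancel: "pmult a (pmult a b) = b"
  by (simp flip: pmult_assoc)
lemma pmult_cancel2: "pmult (pmult b a) a = b"
  by (simp add: pmult_assoc)

lemma pid_G[simp]: "pid \<in> pauli_group n"
  unfolding pauli_group_def pid_def by simp
lemma pmult_G: "a \<in> pauli_group n \<Longrightarrow> b \<in> pauli_group n \<Longrightarrow> pmult a b \<in> pauli_group n"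
  unfolding pauli_group_def pmult_def by (auto, metis mult1.simps(1), metis mult1.simps(1))

lemma UNIV_pauli1: "(UNIV :: pauli1 set) = {PI,PX,PY,PZ}"
  using pauli1.exhaust by auto

lemma finite_G[simp]: "finite (pauli_group n)"
proof -
  have "pauli_group n = {f. \<forall>x. (x \<in> {1..n} \<longrightarrow> f x \<in> UNIV) \<and> (x \<notin> {1..n} \<longrightarrow> f x = PI)}"
    unfolding pauli_group_def by blast
  moreover have "finite (UNIV :: pauli1 set)" by (simp add: UNIV_pauli1)
  ultimately show ?thesis using finite_set_of_finite_funs[of "{1..n}" "UNIV :: pauli1 set" PI] by simp
qed

definition sg1 :: "pauli1 \<Rightarrow> pauli1 \<Rightarrow> real" where
  "sg1 x y = (if anticomm1 x y then -1 else 1)"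

lemma symp_prod: "symp n a e = (\<Prod>i\<in>{1..n}. sg1 (a i) (e i))"
proof -
  have "(\<Prod>i\<in>{1..n}. sg1 (a i) (e i)) =
     prod (\<lambda>_. -1::real) ({1..n} \<inter> {i. anticomm1 (a i) (e i)}) * prod (\<lambda>_. 1) ({1..n} \<inter> - {i. anticomm1 (a i) (e i)})"
    unfolding sg1_def by (rule prod.If_cases) simp
  also have "\<dots> = (-1) ^ card {i \<in> {1..n}. anticomm1 (a i) (e i)}"
    by (simp add: Int_def conj_commute)
  finally show ?thesis unfolding symp_def by simp
qed

lemma sg1_mult: "sg1 (mult1 a b) y = sg1 a y * sg1 b y"
  unfolding sg1_def anticomm1_def by (cases a; cases b; cases y; simp)
lemma sg1_comm: "sg1 a b = sg1 b a"
  unfolding sg1_def anticomm1_def by auto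
lemma sg1_PI[simp]: "sg1 x PI = 1" "sg1 PI x = 1"
  unfolding sg1_def anticomm1_def by auto
lemma sg1_sq: "sg1 x y * sg1 x y = 1"
  unfolding sg1_def by auto

lemma symp_mult: "symp n (pmult a b) y = symp n a y * symp n b y"
  unfolding symp_prod pmult_def by (simp add: sg1_mult prod.distrib)
lemma symp_comm: "symp n a b = symp n b a"
  unfolding symp_prod by (simp add: sg1_comm)
lemma symp_mult2: "symp n y (pmult a b) = symp n y a * symp n y b"
  by (metis symp_comm symp_mult)
lemma symp_sq: "symp n a e * symp n a e = 1"
  unfolding symp_prod by (simp add: sg1_sq flip: prod.distrib)
lemma symp_pid[simp]: "symp n pid e = 1" "symp n e pid = 1"
  unfolding symp_prod pid_def by simp_all
lemma symp_pm: "symp n a e = 1 \<or> symp n a e = -1"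
  using symp_sq[of n a e] by (metis mult_cancel_left1 square_eq_1_iff)


lemma G_psubgroup: "psubgroup n (pauli_group n)"
  unfolding psubgroup_def by (simp add: pmult_G)

lemma psub_finite: "psubgroup n H \<Longrightarrow> finite H"
  unfolding psubgroup_def by (meson finite_G finite_subset)

lemma char_sum_zero:
  assumes H: "psubgroup n H" and h0: "h0 \<in> H" and y: "symp n h0 y = -1"
    and f: "\<forall>a\<in>H. f (pmult a h0) = f a"
  shows "(\<Sum>a\<in>H. symp n a y * f a) = 0"
proof -
  have bij: "bij_betw (\<lambda>a. pmult a h0) H H"
  proof (rule bij_betw_byWitness[where f'="\<lambda>a. pmult a h0"])
    show "\<forall>a\<in>H. pmult (pmult a h0) h0 = a" by (simp add: pmult_cancel2)
    show "\<forall>a\<in>H. pmult (pmult a h0) h0 = a" by (simp add: pmult_cancel2)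
    show "(\<lambda>a. pmult a h0) ` H \<subseteq> H" using H h0 unfolding psubgroup_def by blast
    show "(\<lambda>a. pmult a h0) ` H \<subseteq> H" using H h0 unfolding psubgroup_def by blast
  qed
  have "(\<Sum>a\<in>H. symp n a y * f a) = (\<Sum>a\<in>H. symp n (pmult a h0) y * f (pmult a h0))"
    using sum.reindex_bij_betw[OF bij, of "\<lambda>a. symp n a y * f a"] by simp
  also have "\<dots> = (\<Sum>a\<in>H. - (symp n a y * f a))"
    by (rule sum.cong) (simp_all add: symp_mult y f)
  also have "\<dots> = - (\<Sum>a\<in>H. symp n a y * f a)"
    by (rule sum_negf)
  finally show ?thesis by simp
qed

lemma sg1_anti: "x \<noteq> PI \<Longrightarrow> sg1 (if x = PX then PZ else PX) x = -1"
  by (cases x) (simp_all add: sg1_def anticomm1_def)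

lemma single_anti:
  assumes "i \<in> {1..n}" "y i \<noteq> PI"
  shows "\<exists>h0 \<in> pauli_group n. symp n h0 y = -1 \<and> (\<forall>j. j \<noteq> i \<longrightarrow> h0 j = PI)"
proof -
  define p where "p = (if y i = PX then PZ else PX)"
  define h0 where "h0 = pid(i := p)"
  have pn: "p \<noteq> PI" by (simp add: p_def)
  have "\<forall>j. h0 j \<noteq> PI \<longrightarrow> j \<in> {1..n}"
    using assms(1) by (simp add: h0_def pid_def)
  then have "h0 \<in> pauli_group n" unfolding pauli_group_def by blast
  moreover have "symp n h0 y = -1"
  proof -
    have "symp n h0 y = (\<Prod>j\<in>{1..n}. if j = i then sg1 p (y i) else 1)"
      unfolding symp_prod by (rule prod.cong) (simp_all add: h0_def pid_def)
    also have "\<dots> = sg1 p (y i)" using assms(1) by (simp only: prod.delta finite_atLeastAtMost if_True)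
    also have "\<dots> = -1" unfolding p_def by (rule sg1_anti[OF assms(2)])
    finally show ?thesis .
  qed
  moreover have "\<forall>j. j \<noteq> i \<longrightarrow> h0 j = PI" unfolding h0_def pid_def by simp
  ultimately show ?thesis by blast
qed

lemma perp_sub: "perp n H \<subseteq> pauli_group n" unfolding perp_def by auto

lemma orth_sub:
  assumes H: "psubgroup n H" and y: "y \<in> pauli_group n"
  shows "(\<Sum>h\<in>H. symp n h y) = (if y \<in> perp n H then real (card H) else 0)"
proof (cases "y \<in> perp n H")
  case True
  then have "\<forall>h\<in>H. symp n h y = 1" unfolding perp_def by (auto simp: symp_comm)
  then show ?thesis using True by simp
next
  case False
  then obtain h0 where h0: "h0 \<in> H" "symp n y h0 \<noteq> 1" using y unfolding perp_def by auto
  then have "symp n h0 y = -1" using symp_pm symp_comm by metis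
  from char_sum_zero[OF H h0(1) this, of "\<lambda>_. 1"] False show ?thesis by simp
qed

lemma perp_G: "y \<in> pauli_group n \<Longrightarrow> y \<in> perp n (pauli_group n) \<longleftrightarrow> y = pid"
proof
  assume y: "y \<in> pauli_group n" "y \<in> perp n (pauli_group n)"
  show "y = pid"
  proof (rule ccontr)
    assume "y \<noteq> pid"
    then obtain i where "y i \<noteq> PI" unfolding pid_def by auto
    moreover then have "i \<in> {1..n}" using y unfolding pauli_group_def by auto
    ultimately obtain h0 where "h0 \<in> pauli_group n" "symp n h0 y = -1"
      using single_anti by blast
    then show False using y unfolding perp_def by (auto simp: symp_comm)
  qed
qed (auto simp: perp_def)

lemma orth_G:
  assumes y: "y \<in> pauli_group n"
  shows "(\<Sum>a\<in>pauli_group n. symp n a y) = (if y = pid then real (card (pauli_group n)) else 0)"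
  using orth_sub[OF G_psubgroup y] perp_G[OF y] by simp

lemma pmult_eq_pid: "pmult x a = pid \<longleftrightarrow> a = x"
  by (metis pmult_cancel pmult_pid_right pmult_self)

lemma inversion:
  assumes x: "x \<in> pauli_group n"
  shows "(\<Sum>e\<in>pauli_group n. symp n x e * stab_expect n f e) = real (card (pauli_group n)) * f x"
proof -
  let ?G = "pauli_group n"
  have "(\<Sum>e\<in>?G. symp n x e * stab_expect n f e) = (\<Sum>e\<in>?G. \<Sum>a\<in>?G. symp n x e * symp n e a * f a)"
    unfolding stab_expect_def by (simp add: sum_distrib_left mult.assoc)
  also have "\<dots> = (\<Sum>a\<in>?G. \<Sum>e\<in>?G. symp n e (pmult x a) * f a)"
    by (subst sum.swap) (simp add: symp_mult2 symp_comm[of n x])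
  also have "\<dots> = (\<Sum>a\<in>?G. (if pmult x a = pid then real (card ?G) else 0) * f a)"
    by (simp add: orth_G pmult_G x flip: sum_distrib_right)
  also have "\<dots> = (\<Sum>a\<in>?G. if a = x then real (card ?G) * f a else 0)"
    by (rule sum.cong) (simp_all add: pmult_eq_pid)
  also have "\<dots> = real (card ?G) * f x" using x by simp
  finally show ?thesis .
qed


lemma sum_shift:
  assumes "e' \<in> pauli_group n"
  shows "(\<Sum>e\<in>pauli_group n. \<phi> e) = (\<Sum>e\<in>pauli_group n. \<phi> (pmult e e'))"
proof -
  have bij: "bij_betw (\<lambda>a. pmult a e') (pauli_group n) (pauli_group n)"
  proof (rule bij_betw_byWitness[where f'="\<lambda>a. pmult a e'"])
    show "\<forall>a\<in>pauli_group n. pmult (pmult a e') e' = a" by (simp add: pmult_cancel2)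
    show "\<forall>a\<in>pauli_group n. pmult (pmult a e') e' = a" by (simp add: pmult_cancel2)
    show "(\<lambda>a. pmult a e') ` pauli_group n \<subseteq> pauli_group n" using assms pmult_G by blast
    show "(\<lambda>a. pmult a e') ` pauli_group n \<subseteq> pauli_group n" using assms pmult_G by blast
  qed
  show ?thesis using sum.reindex_bij_betw[OF bij, of \<phi>] by simp
qed

lemma conv_lc: "conv n f (conv n g h) = conv n g (conv n f h)"
proof
  fix e
  let ?G = "pauli_group n"
  show "conv n f (conv n g h) e = conv n g (conv n f h) e"
  proof (cases "e \<in> ?G")
    case False then show ?thesis unfolding conv_def by simp
  next
    case True
    have sw: "pmult (pmult e x) y = pmult (pmult e y) x" for x y by (metis pmult_assoc pmult_comm)
    have "conv n f (conv n g h) e = (\<Sum>x\<in>?G. \<Sum>y\<in>?G. f x * (g y * h (pmult (pmult e x) y)))"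
      unfolding conv_def using True by (simp add: pmult_G sum_distrib_left)
    also have "\<dots> = (\<Sum>y\<in>?G. \<Sum>x\<in>?G. g y * (f x * h (pmult (pmult e y) x)))"
      by (subst sum.swap) (simp add: sw mult.left_commute)
    also have "\<dots> = conv n g (conv n f h) e"
      unfolding conv_def using True by (simp add: pmult_G sum_distrib_left)
    finally show ?thesis .
  qed
qed

lemma cfc: "comp_fun_commute_on UNIV (\<lambda>\<gamma> acc. conv n (Pf \<gamma>) acc)"
  by unfold_locales (simp add: fun_eq_iff conv_lc)

lemma conv_over_empty[simp]: "conv_over n {} Pf = delta_id n"
  unfolding conv_over_def by simp

lemma conv_over_insert:
  "finite \<Gamma> \<Longrightarrow> \<gamma> \<notin> \<Gamma> \<Longrightarrow> conv_over n (insert \<gamma> \<Gamma>) Pf = conv n (Pf \<gamma>) (conv_over n \<Gamma> Pf)"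
  unfolding conv_over_def by (rule comp_fun_commute_on.fold_insert[OF cfc]) auto

lemma FT_conv:
  assumes a: "a \<in> pauli_group n"
  shows "stab_expect n (conv n f g) a = stab_expect n f a * stab_expect n g a"
proof -
  let ?G = "pauli_group n"
  have "stab_expect n (conv n f g) a = (\<Sum>x\<in>?G. f x * (\<Sum>e\<in>?G. symp n a e * g (pmult e x)))"
  proof -
    have "stab_expect n (conv n f g) a = (\<Sum>e\<in>?G. symp n a e * (\<Sum>x\<in>?G. f x * g (pmult e x)))"
      unfolding stab_expect_def conv_def by (rule sum.cong) auto
    also have "\<dots> = (\<Sum>e\<in>?G. \<Sum>x\<in>?G. symp n a e * (f x * g (pmult e x)))"
      by (simp only: sum_distrib_left)
    also have "\<dots> = (\<Sum>x\<in>?G. \<Sum>e\<in>?G. symp n a e * (f x * g (pmult e x)))"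
      by (rule sum.swap)
    also have "\<dots> = (\<Sum>x\<in>?G. f x * (\<Sum>e\<in>?G. symp n a e * g (pmult e x)))"
      by (simp only: sum_distrib_left mult.left_commute)
    finally show ?thesis .
  qed
  also have "\<dots> = (\<Sum>x\<in>?G. f x * (symp n a x * stab_expect n g a))"
  proof (rule sum.cong)
    fix x assume x: "x \<in> ?G"
    have "(\<Sum>e\<in>?G. symp n a e * g (pmult e x)) = (\<Sum>e\<in>?G. symp n a (pmult e x) * g (pmult (pmult e x) x))"
      by (rule sum_shift[OF x])
    also have "\<dots> = symp n a x * stab_expect n g a"
      unfolding stab_expect_def by (simp add: symp_mult2 pmult_cancel2 sum_distrib_left mult_ac)
    finally show "f x * (\<Sum>e\<in>?G. symp n a e * g (pmult e x)) = f x * (symp n a x * stab_expect n g a)"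
      by simp
  qed simp
  also have "\<dots> = stab_expect n f a * stab_expect n g a"
    unfolding stab_expect_def by (simp add: sum_distrib_right mult_ac)
  finally show ?thesis .
qed

lemma FT_delta[simp]: "stab_expect n (delta_id n) a = 1"
proof -
  have "stab_expect n (delta_id n) a = (\<Sum>e\<in>pauli_group n. if e = pid then symp n a e else 0)"
    unfolding stab_expect_def delta_id_def by (rule sum.cong) auto
  then show ?thesis by simp
qed

lemma FT_conv_over:
  assumes "finite \<Gamma>" "a \<in> pauli_group n"
  shows "stab_expect n (conv_over n \<Gamma> Pf) a = (\<Prod>\<gamma>\<in>\<Gamma>. stab_expect n (Pf \<gamma>) a)"
  using assms(1)
proof (induction \<Gamma> rule: finite_induct)
  case (insert x F)
  then show ?case by (simp add: conv_over_insert FT_conv assms(2))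
qed simp

lemma conv_over_nonneg:
  assumes "finite \<Gamma>" "\<forall>\<gamma>\<in>\<Gamma>. \<forall>e. 0 \<le> Pf \<gamma> e"
  shows "0 \<le> conv_over n \<Gamma> Pf e"
  using assms
proof (induction \<Gamma> arbitrary: e rule: finite_induct)
  case empty then show ?case by (simp add: delta_id_def)
next
  case (insert x F)
  then show ?case by (auto simp: conv_over_insert conv_def intro!: sum_nonneg mult_nonneg_nonneg)
qed


lemma FT_local:
  assumes f0: "\<forall>e. \<not> supp e \<subseteq> \<gamma> \<longrightarrow> f e = 0" and ab: "\<forall>i\<in>\<gamma>. a i = b i"
  shows "stab_expect n f a = stab_expect n f b"
  unfolding stab_expect_def
proof (rule sum.cong[OF refl])
  fix e assume e: "e \<in> pauli_group n"
  show "symp n a e * f e = symp n b e * f e"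
  proof (cases "supp e \<subseteq> \<gamma>")
    case True
    have "symp n a e = symp n b e"
      unfolding symp_prod
    proof (rule prod.cong[OF refl])
      fix i assume "i \<in> {1..n}"
      show "sg1 (a i) (e i) = sg1 (b i) (e i)"
      proof (cases "i \<in> \<gamma>")
        case True then show ?thesis using ab by simp
      next
        case False then have "e i = PI" using \<open>supp e \<subseteq> \<gamma>\<close> unfolding supp_def by blast
        then show ?thesis by simp
      qed
    qed
    then show ?thesis by simp
  next
    case False then show ?thesis using f0 by simp
  qed
qed

lemma hat_local_zero:
  assumes loc: "\<forall>a b. (\<forall>i\<in>\<gamma>. a i = b i) \<longrightarrow> h a = h b"
    and e: "e \<in> pauli_group n" and ns: "\<not> supp e \<subseteq> \<gamma>"
  shows "(\<Sum>a\<in>pauli_group n. symp n a e * h a) = 0"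
proof -
  obtain i where i: "e i \<noteq> PI" "i \<notin> \<gamma>" using ns unfolding supp_def by blast
  then have "i \<in> {1..n}" using e unfolding pauli_group_def by blast
  then obtain h0 where h0: "h0 \<in> pauli_group n" "symp n h0 e = -1" "\<forall>j. j \<noteq> i \<longrightarrow> h0 j = PI"
    using single_anti i(1) by blast
  have "\<forall>a\<in>pauli_group n. h (pmult a h0) = h a"
  proof
    fix a
    have "\<forall>j\<in>\<gamma>. pmult a h0 j = a j" using h0(3) i(2) unfolding pmult_def by auto
    then show "h (pmult a h0) = h a" using loc by blast
  qed
  from char_sum_zero[OF G_psubgroup h0(1) h0(2) this] show ?thesis .
qed

lemma perp_mult: "a \<in> perp n S \<Longrightarrow> b \<in> perp n S \<Longrightarrow> pmult a b \<in> perp n S"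
  unfolding perp_def by (simp add: pmult_G symp_mult)

lemma pid_perp: "pid \<in> perp n S"
  unfolding perp_def by simp

lemma supp_pmult: "supp (pmult a b) \<subseteq> supp a \<union> supp b"
  unfolding supp_def pmult_def by auto

lemma card_G_pos: "card (pauli_group n) > 0"
  using finite_G pid_G card_gt_0_iff by blast

lemma card_psub_pos: "psubgroup n S \<Longrightarrow> card S > 0"
  using psub_finite card_gt_0_iff unfolding psubgroup_def by blast


lemma key:
  fixes D :: "pauli \<Rightarrow> real" and h :: "nat set \<Rightarrow> pauli \<Rightarrow> real"
  assumes S: "psubgroup n S" and fin: "finite \<Gamma>"
    and corr: "\<forall>\<gamma>1\<in>\<Gamma>. \<forall>\<gamma>2\<in>\<Gamma>. correctable_region n S (\<gamma>1 \<union> \<gamma>2)"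
    and D: "\<forall>a\<in>pauli_group n. D a = (\<Sum>\<gamma>\<in>\<Gamma>. h \<gamma> a)"
    and loc: "\<forall>\<gamma>\<in>\<Gamma>. \<forall>a b. (\<forall>i\<in>\<gamma>. a i = b i) \<longrightarrow> h \<gamma> a = h \<gamma> b"
    and zero: "\<forall>s\<in>S. D s = 0"
    and l: "l \<in> perp n S"
  shows "D l = 0"
proof -
  let ?G = "pauli_group n"
  let ?N = "real (card ?G)"
  let ?L = "perp n S"
  define Dh where "Dh e = stab_expect n D e" for e
  have SG: "S \<subseteq> ?G" using S unfolding psubgroup_def by blast
  have finS: "finite S" using psub_finite[OF S] .
  have lG: "l \<in> ?G" using l perp_sub by blast
  have inv: "?N * D x = (\<Sum>e\<in>?G. symp n x e * Dh e)" if "x \<in> ?G" for x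
    unfolding Dh_def using inversion[OF that, of D] by simp
  have suppDh: "\<exists>\<gamma>\<in>\<Gamma>. supp e \<subseteq> \<gamma>" if e: "e \<in> ?G" and nz: "Dh e \<noteq> 0" for e
  proof (rule ccontr)
    assume "\<not> (\<exists>\<gamma>\<in>\<Gamma>. supp e \<subseteq> \<gamma>)"
    then have ns: "\<forall>\<gamma>\<in>\<Gamma>. \<not> supp e \<subseteq> \<gamma>" by blast
    have "Dh e = (\<Sum>a\<in>?G. \<Sum>\<gamma>\<in>\<Gamma>. symp n a e * h \<gamma> a)"
      unfolding Dh_def stab_expect_def
      by (rule sum.cong[OF refl]) (simp add: D symp_comm[of n e] sum_distrib_left)
    also have "\<dots> = (\<Sum>\<gamma>\<in>\<Gamma>. \<Sum>a\<in>?G. symp n a e * h \<gamma> a)"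
      by (rule sum.swap)
    also have "\<dots> = (\<Sum>\<gamma>\<in>\<Gamma>. 0)"
    proof (rule sum.cong[OF refl])
      fix \<gamma> assume g: "\<gamma> \<in> \<Gamma>"
      show "(\<Sum>a\<in>?G. symp n a e * h \<gamma> a) = 0"
        by (rule hat_local_zero[OF _ e]) (use loc g ns in blast)+
    qed
    finally show False using nz by simp
  qed
  have coset0: "(\<Sum>e\<in>{e\<in>?G. pmult x e \<in> ?L}. Dh e) = 0" if x: "x \<in> ?G" for x
  proof -
    have "0 = (\<Sum>s\<in>S. symp n s x * (?N * D s))" using zero by simp
    also have "\<dots> = (\<Sum>s\<in>S. symp n s x * (\<Sum>e\<in>?G. symp n s e * Dh e))"
      by (rule sum.cong[OF refl]) (use inv SG in auto)
    also have "\<dots> = (\<Sum>s\<in>S. \<Sum>e\<in>?G. Dh e * symp n s (pmult x e))"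
      by (simp add: sum_distrib_left symp_mult2 mult_ac)
    also have "\<dots> = (\<Sum>e\<in>?G. Dh e * (\<Sum>s\<in>S. symp n s (pmult x e)))"
      by (subst sum.swap) (simp add: sum_distrib_left)
    also have "\<dots> = (\<Sum>e\<in>?G. Dh e * (if pmult x e \<in> ?L then real (card S) else 0))"
      by (rule sum.cong[OF refl]) (simp add: orth_sub[OF S] pmult_G x)
    also have "\<dots> = real (card S) * (\<Sum>e\<in>?G. if pmult x e \<in> ?L then Dh e else 0)"
      by (simp add: sum_distrib_left) (rule sum.cong[OF refl], simp)
    also have "\<dots> = real (card S) * (\<Sum>e\<in>{e\<in>?G. pmult x e \<in> ?L}. Dh e)"
      by (simp add: sum.inter_filter)
    finally show ?thesis using card_psub_pos[OF S] by simp
  qed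
  define T where "T = {e\<in>?G. Dh e \<noteq> 0}"
  define R where "R e e' \<longleftrightarrow> pmult e e' \<in> ?L" for e e'
  define c where "c e = card {e'\<in>T. R e e'}" for e
  have finT: "finite T" unfolding T_def by simp
  have TG: "T \<subseteq> ?G" unfolding T_def by blast
  have Rsym: "R e e' \<longleftrightarrow> R e' e" for e e' unfolding R_def by (simp add: pmult_comm)
  have Rrefl: "R e e" for e unfolding R_def by (simp add: pid_perp)
  have Rtrans: "R e x" if "R e e'" "R e' x" for e e' x
  proof -
    have "pmult e x = pmult (pmult e e') (pmult e' x)"
      by (metis pmult_assoc pmult_cancel)
    then show ?thesis using that perp_mult unfolding R_def by metis
  qed
  have sameS: "symp n l e = symp n l e'" if asm: "e \<in> T" "e' \<in> T" "R e e'" for e e'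
  proof -
    obtain \<gamma>1 where g1: "\<gamma>1 \<in> \<Gamma>" "supp e \<subseteq> \<gamma>1" using suppDh asm(1) unfolding T_def by blast
    obtain \<gamma>2 where g2: "\<gamma>2 \<in> \<Gamma>" "supp e' \<subseteq> \<gamma>2" using suppDh asm(2) unfolding T_def by blast
    have "supp (pmult e e') \<subseteq> \<gamma>1 \<union> \<gamma>2" using supp_pmult g1 g2 by blast
    moreover have "correctable_region n S (\<gamma>1 \<union> \<gamma>2)" using corr g1 g2 by blast
    ultimately have "pmult e e' \<in> S" using asm(3) unfolding R_def correctable_region_def by blast
    then have "symp n l (pmult e e') = 1" using l unfolding perp_def by blast
    then have "symp n l e * symp n l e' = 1" by (simp add: symp_mult2)
    then show ?thesis using symp_pm[of n l e] symp_pm[of n l e'] by auto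
  qed
  have sameC: "c e = c e'" if "R e e'" for e e'
  proof -
    have "{x\<in>T. R e x} = {x\<in>T. R e' x}"
      using Rtrans Rsym that by blast
    then show ?thesis unfolding c_def by simp
  qed
  have cpos: "c e > 0" if "e \<in> T" for e
  proof -
    have "e \<in> {x\<in>T. R e x}" using that Rrefl by blast
    then show ?thesis unfolding c_def using finT card_gt_0_iff by fastforce
  qed
  have "?N * D l = (\<Sum>e\<in>?G. symp n l e * Dh e)" using inv lG by blast
  also have "\<dots> = (\<Sum>e\<in>T. symp n l e * Dh e)"
    by (rule sum.mono_neutral_right) (auto simp: T_def)
  also have "\<dots> = (\<Sum>e\<in>T. \<Sum>e'\<in>{e'\<in>T. R e e'}. symp n l e * Dh e / real (c e))"
  proof (rule sum.cong[OF refl])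
    fix e assume e: "e \<in> T"
    have "(\<Sum>e'\<in>{e'\<in>T. R e e'}. symp n l e * Dh e / real (c e)) = real (c e) * (symp n l e * Dh e / real (c e))"
      unfolding c_def by simp
    also have "\<dots> = symp n l e * Dh e" using cpos[OF e] by simp
    finally show "symp n l e * Dh e = (\<Sum>e'\<in>{e'\<in>T. R e e'}. symp n l e * Dh e / real (c e))" by simp
  qed
  also have "\<dots> = (\<Sum>e'\<in>T. \<Sum>e\<in>{e\<in>T. R e e'}. symp n l e * Dh e / real (c e))"
    by (rule sum.swap_restrict[OF finT finT])
  also have "\<dots> = (\<Sum>e'\<in>T. (symp n l e' / real (c e')) * (\<Sum>e\<in>{e\<in>?G. pmult e' e \<in> ?L}. Dh e))"
  proof (rule sum.cong[OF refl])
    fix e' assume e': "e' \<in> T"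
    have "(\<Sum>e\<in>{e\<in>T. R e e'}. symp n l e * Dh e / real (c e))
        = (\<Sum>e\<in>{e\<in>T. R e e'}. (symp n l e' / real (c e')) * Dh e)"
    proof (rule sum.cong[OF refl])
      fix e assume "e \<in> {e\<in>T. R e e'}"
      then have "e \<in> T" "R e e'" by auto
      then show "symp n l e * Dh e / real (c e) = (symp n l e' / real (c e')) * Dh e"
        using sameS[OF _ e'] sameC by simp
    qed
    also have "\<dots> = (symp n l e' / real (c e')) * (\<Sum>e\<in>{e\<in>T. R e e'}. Dh e)"
      by (simp add: sum_distrib_left)
    also have "(\<Sum>e\<in>{e\<in>T. R e e'}. Dh e) = (\<Sum>e\<in>{e\<in>?G. pmult e' e \<in> ?L}. Dh e)"
    proof (rule sum.mono_neutral_left)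
      show "finite {e\<in>?G. pmult e' e \<in> ?L}" by simp
      show "{e\<in>T. R e e'} \<subseteq> {e\<in>?G. pmult e' e \<in> ?L}"
        using TG Rsym unfolding R_def by blast
      show "\<forall>i\<in>{e\<in>?G. pmult e' e \<in> ?L} - {e\<in>T. R e e'}. Dh i = 0"
        using Rsym unfolding T_def R_def by blast
    qed
    finally show "(\<Sum>e\<in>{e\<in>T. R e e'}. symp n l e * Dh e / real (c e))
        = (symp n l e' / real (c e')) * (\<Sum>e\<in>{e\<in>?G. pmult e' e \<in> ?L}. Dh e)" .
  qed
  also have "\<dots> = 0"
    using coset0 TG by (simp add: subsetD)
  finally have "?N * D l = 0" .
  then show ?thesis using card_G_pos[of n] by (metis mult_eq_0_iff of_nat_0_less_iff less_irrefl)
qed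


lemma logical_formula:
  assumes S: "psubgroup n S" and e: "e \<in> pauli_group n"
  shows "logical_channel S P e = (1 / real (card (pauli_group n))) *
     (\<Sum>a\<in>pauli_group n. if a \<in> perp n S then symp n e a * stab_expect n P a else 0)"
proof -
  let ?G = "pauli_group n"
  let ?N = "real (card ?G)"
  have SG: "S \<subseteq> ?G" using S unfolding psubgroup_def by blast
  have Npos: "?N > 0" using card_G_pos[of n] by simp
  have Spos: "real (card S) > 0" using card_psub_pos[OF S] by simp
  have "?N * (\<Sum>s\<in>S. P (pmult e s)) = (\<Sum>s\<in>S. ?N * P (pmult e s))"
    by (simp add: sum_distrib_left)
  also have "\<dots> = (\<Sum>s\<in>S. \<Sum>a\<in>?G. symp n (pmult e s) a * stab_expect n P a)"
  proof (rule sum.cong[OF refl])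
    fix s assume "s \<in> S"
    then have "pmult e s \<in> ?G" using SG e pmult_G by blast
    then show "?N * P (pmult e s) = (\<Sum>a\<in>?G. symp n (pmult e s) a * stab_expect n P a)"
      using inversion by metis
  qed
  also have "\<dots> = (\<Sum>a\<in>?G. (symp n e a * stab_expect n P a) * (\<Sum>s\<in>S. symp n s a))"
    by (subst sum.swap) (simp add: symp_mult sum_distrib_left mult_ac)
  also have "\<dots> = (\<Sum>a\<in>?G. (symp n e a * stab_expect n P a) * (if a \<in> perp n S then real (card S) else 0))"
    by (rule sum.cong[OF refl]) (simp add: orth_sub[OF S])
  also have "\<dots> = real (card S) * (\<Sum>a\<in>?G. if a \<in> perp n S then symp n e a * stab_expect n P a else 0)"
    by (simp add: sum_distrib_left) (rule sum.cong[OF refl], simp)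
  finally have *: "?N * (\<Sum>s\<in>S. P (pmult e s)) = real (card S) * (\<Sum>a\<in>?G. if a \<in> perp n S then symp n e a * stab_expect n P a else 0)" .
  define X where "X = (\<Sum>a\<in>?G. if a \<in> perp n S then symp n e a * stab_expect n P a else 0)"
  have "(\<Sum>s\<in>S. P (pmult e s)) = (?N * (\<Sum>s\<in>S. P (pmult e s))) / ?N" using Npos by (metis less_irrefl nonzero_mult_div_cancel_left)
  also have "\<dots> = (real (card S) * X) / ?N" using * unfolding X_def by simp
  finally have eq: "(\<Sum>s\<in>S. P (pmult e s)) = (real (card S) * X) / ?N" .
  show ?thesis unfolding logical_channel_def X_def[symmetric] eq using Spos by simp
qed

lemma FT_pos:
  assumes nn: "\<forall>e. 0 \<le> P e" and s1: "(\<Sum>e\<in>pauli_group n. P e) = 1" and half: "P pid > 1/2"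
    and a: "a \<in> pauli_group n"
  shows "stab_expect n P a > 0"
proof -
  let ?G = "pauli_group n"
  have "(\<Sum>e\<in>?G. (if e = pid then 2 * P e else 0) - P e) \<le> (\<Sum>e\<in>?G. symp n a e * P e)"
  proof (rule sum_mono)
    fix e assume "e \<in> ?G"
    show "(if e = pid then 2 * P e else 0) - P e \<le> symp n a e * P e"
      using symp_pm[of n a e] nn[rule_format, of e] by auto
  qed
  moreover have "(\<Sum>e\<in>?G. (if e = pid then 2 * P e else 0) - P e) = 2 * P pid - 1"
    by (simp add: sum_subtractf s1)
  ultimately show ?thesis unfolding stab_expect_def using half by linarith
qed

lemma chan_pos:
  assumes fin: "finite \<Gamma>" and lf: "local_family n \<Gamma> Pf" and half: "conv_over n \<Gamma> Pf pid > 1/2"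
    and a: "a \<in> pauli_group n"
  shows "stab_expect n (conv_over n \<Gamma> Pf) a > 0"
proof -
  have nn: "\<forall>e. 0 \<le> conv_over n \<Gamma> Pf e"
    using conv_over_nonneg[OF fin] lf unfolding local_family_def prob_dist_def by blast
  have "(\<Sum>e\<in>pauli_group n. conv_over n \<Gamma> Pf e) = stab_expect n (conv_over n \<Gamma> Pf) pid"
    unfolding stab_expect_def by simp
  also have "\<dots> = (\<Prod>\<gamma>\<in>\<Gamma>. stab_expect n (Pf \<gamma>) pid)" by (rule FT_conv_over[OF fin pid_G])
  also have "\<dots> = (\<Prod>\<gamma>\<in>\<Gamma>. 1)"
  proof (rule prod.cong[OF refl])
    fix \<gamma> assume "\<gamma> \<in> \<Gamma>"
    then have "(\<Sum>e\<in>pauli_group n. Pf \<gamma> e) = 1" using lf unfolding local_family_def prob_dist_def by blast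
    then show "stab_expect n (Pf \<gamma>) pid = 1" unfolding stab_expect_def by simp
  qed
  finally have s1: "(\<Sum>e\<in>pauli_group n. conv_over n \<Gamma> Pf e) = 1" by simp
  show ?thesis by (rule FT_pos[OF nn s1 half a])
qed

lemma ln_FT:
  assumes fin: "finite \<Gamma>" and lf: "local_family n \<Gamma> Pf" and half: "conv_over n \<Gamma> Pf pid > 1/2"
    and a: "a \<in> pauli_group n"
  shows "ln (stab_expect n (conv_over n \<Gamma> Pf) a) = (\<Sum>\<gamma>\<in>\<Gamma>. ln \<bar>stab_expect n (Pf \<gamma>) a\<bar>)"
proof -
  have pos: "stab_expect n (conv_over n \<Gamma> Pf) a > 0" by (rule chan_pos[OF fin lf half a])
  have eq: "stab_expect n (conv_over n \<Gamma> Pf) a = (\<Prod>\<gamma>\<in>\<Gamma>. stab_expect n (Pf \<gamma>) a)"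
    by (rule FT_conv_over[OF fin a])
  have nz: "\<forall>\<gamma>\<in>\<Gamma>. stab_expect n (Pf \<gamma>) a \<noteq> 0"
    using pos eq fin by (metis less_irrefl prod_zero_iff)
  have "stab_expect n (conv_over n \<Gamma> Pf) a = (\<Prod>\<gamma>\<in>\<Gamma>. \<bar>stab_expect n (Pf \<gamma>) a\<bar>)"
    using pos eq by (metis abs_of_pos abs_prod)
  then show ?thesis using ln_prod[OF fin, of "\<lambda>\<gamma>. \<bar>stab_expect n (Pf \<gamma>) a\<bar>"] nz by simp
qed

theorem theorem1:
  fixes n :: nat and S :: "pauli set" and \<Gamma> :: "nat set set"
    and Pf Pf' :: "nat set \<Rightarrow> pauli \<Rightarrow> real"
  assumes "stabilizer_group n S"
    and "\<Gamma> \<subseteq> Pow {1..n}"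
    and "local_family n \<Gamma> Pf" and "local_family n \<Gamma> Pf'"
    and "correctable_channel n S \<Gamma> Pf" and "correctable_channel n S \<Gamma> Pf'"
    and "\<forall>s\<in>S. stab_expect n (conv_over n \<Gamma> Pf) s = stab_expect n (conv_over n \<Gamma> Pf') s"
  shows "\<forall>e\<in>pauli_group n.
           logical_channel S (conv_over n \<Gamma> Pf) e = logical_channel S (conv_over n \<Gamma> Pf') e"
proof
  fix e assume e: "e \<in> pauli_group n"
  let ?P = "conv_over n \<Gamma> Pf"
  let ?P' = "conv_over n \<Gamma> Pf'"
  have S: "psubgroup n S" using assms(1) unfolding stabilizer_group_def by blast
  have "finite (Pow {1..n})" by simp
  then have fin: "finite \<Gamma>" using assms(2) by (rule finite_subset[rotated])
  have h1: "?P pid > 1/2" using assms(5) unfolding correctable_channel_def by blast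
  have h2: "?P' pid > 1/2" using assms(6) unfolding correctable_channel_def by blast
  have corr: "\<forall>\<gamma>1\<in>\<Gamma>. \<forall>\<gamma>2\<in>\<Gamma>. correctable_region n S (\<gamma>1 \<union> \<gamma>2)"
    using assms(5) unfolding correctable_channel_def by blast
  define D where "D a = ln (stab_expect n ?P a) - ln (stab_expect n ?P' a)" for a
  define h where "h \<gamma> a = ln \<bar>stab_expect n (Pf \<gamma>) a\<bar> - ln \<bar>stab_expect n (Pf' \<gamma>) a\<bar>" for \<gamma> a
  have L: "stab_expect n ?P l = stab_expect n ?P' l" if l: "l \<in> perp n S" for l
  proof -
    have "D l = 0"
    proof (rule key[OF S fin corr _ _ _ l])
      show "\<forall>a\<in>pauli_group n. D a = (\<Sum>\<gamma>\<in>\<Gamma>. h \<gamma> a)"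
      proof
        fix a assume a: "a \<in> pauli_group n"
        show "D a = (\<Sum>\<gamma>\<in>\<Gamma>. h \<gamma> a)"
          unfolding D_def h_def ln_FT[OF fin assms(3) h1 a] ln_FT[OF fin assms(4) h2 a]
          by (rule sum_subtractf[symmetric])
      qed
      show "\<forall>\<gamma>\<in>\<Gamma>. \<forall>a b. (\<forall>i\<in>\<gamma>. a i = b i) \<longrightarrow> h \<gamma> a = h \<gamma> b"
      proof (intro ballI allI impI)
        fix \<gamma> and a b :: pauli assume g: "\<gamma> \<in> \<Gamma>" and ab: "\<forall>i\<in>\<gamma>. a i = b i"
        have f1: "\<forall>e. \<not> supp e \<subseteq> \<gamma> \<longrightarrow> Pf \<gamma> e = 0"
          using g assms(3) unfolding local_family_def by blast
        have f2: "\<forall>e. \<not> supp e \<subseteq> \<gamma> \<longrightarrow> Pf' \<gamma> e = 0"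
          using g assms(4) unfolding local_family_def by blast
        have "stab_expect n (Pf \<gamma>) a = stab_expect n (Pf \<gamma>) b" by (rule FT_local[OF f1 ab])
        moreover have "stab_expect n (Pf' \<gamma>) a = stab_expect n (Pf' \<gamma>) b" by (rule FT_local[OF f2 ab])
        ultimately show "h \<gamma> a = h \<gamma> b" unfolding h_def by simp
      qed
      show "\<forall>s\<in>S. D s = 0" unfolding D_def using assms(7) by simp
    qed
    then have lneq: "ln (stab_expect n ?P l) = ln (stab_expect n ?P' l)" unfolding D_def by simp
    have lG: "l \<in> pauli_group n" using l perp_sub by blast
    have p1: "stab_expect n ?P l > 0" by (rule chan_pos[OF fin assms(3) h1 lG])
    have p2: "stab_expect n ?P' l > 0" by (rule chan_pos[OF fin assms(4) h2 lG])
    show ?thesis using lneq ln_inj_iff[OF p1 p2] by simp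
  qed
  have "(\<Sum>a\<in>pauli_group n. if a \<in> perp n S then symp n e a * stab_expect n ?P a else 0)
      = (\<Sum>a\<in>pauli_group n. if a \<in> perp n S then symp n e a * stab_expect n ?P' a else 0)"
    by (rule sum.cong[OF refl]) (simp add: L)
  then show "logical_channel S ?P e = logical_channel S ?P' e"
    unfolding logical_formula[OF S e] by simp
qed

end
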